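(* Let $\mathcal{X}$ be an $n$-premaniplex and $(\mathcal{Y},\eta)$ an $(n,m)$-voltage operator. Let $\tau\in\operatorname{Aut}(\mathcal{Y})$ be such that there exists a group homomorphism $\tau_\#:\operatorname{Mon}(\mathcal{X})\to\operatorname{Mon}(\mathcal{X})$ with $\tau_\#(\overline{\eta(W)})=\overline{\eta(W\tau)}$ for every $W\in\Pi(\mathcal{Y})$, and suppose $\mathcal{X}$ is isomorphic to $\mathcal{X}_{\tau_\#}$. Then $\tau$ lifts to $\mathcal{X}\rtimes_\eta\mathcal{Y}$.
   Context: An $n$-premaniplex is an edge-coloured graph (semi-edges and parallel edges allowed) with colours $\{0,\dots,n-1\}$ such that every vertex (flag) is the start of exactly one dart of each colour, and for $|i-j|\ge2$ alternating $i,j$-paths of length 4 are closed; $x^i$ is the $i$-adjacent flag of $x$. $\mathcal{C}^n=\langle r_0,\dots,r_{n-1}\mid r_i^2,\ (r_ir_j)^2\ (|i-j|\ge2)\rangle$ acts on the left on flags by $r_ix=x^i$; the monodromy group $\operatorname{Mon}(\mathcal{X})$ is the permutation group on flags induced by this action, and $\bar\omega\in\operatorname{Mon}(\mathcal{X})$ denotes the image of $\omega\in\mathcal{C}^n$. $\mathcal{X}_{\tau_\#}$ is the edge-coloured graph with the flags of $\mathcal{X}$ in which the $i$-adjacent flag of $x$ is $\tau_\#(\bar r_i)x$. Isomorphisms are bijections on flags preserving all adjacencies; automorphisms act on the right and map paths to paths, $W\mapsto W\tau$. For a flag $y$ of an $m$-premaniplex $\mathcal{Y}$ and $\omega\in\mathcal{C}^m$,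 $W_\omega(y)$ is the homotopy class of paths from $y$ whose colour sequence $i_1,\dots,i_k$ satisfies $r_{i_k}\cdots r_{i_1}=\omega$; these form the fundamental groupoid $\Pi(\mathcal{Y})$. A voltage assignment $\eta:\Pi(\mathcal{Y})\to\mathcal{C}^n$ satisfies $\eta(W_1W_2)=\eta(W_2)\eta(W_1)$; $(\mathcal{Y},\eta)$ is an $(n,m)$-voltage operator. $\mathcal{X}\rtimes_\eta\mathcal{Y}$ has flags $\mathcal{X}\times\mathcal{Y}$ and $(x,y)^i=(\eta(W_{r_i}(y))x,r_iy)$, $i\in\{0,\dots,m-1\}$. $\tau$ lifts to $\mathcal{X}\rtimes_\eta\mathcal{Y}$ if there is $\tilde\tau\in\operatorname{Aut}(\mathcal{X}\rtimes_\eta\mathcal{Y})$ such that the $\mathcal{Y}$-coordinate of $(x,y)\tilde\tau$ is $y\tau$ for all $(x,y)$. *)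

theory Defs
  imports "HOL-Algebra.Group"
begin

text \<open>Words over colours. A list [a1,...,ak] denotes the Coxeter element
  r_a1 r_a2 ... r_ak. Its left action on flags applies r_ak first.\<close>

definition words :: "nat \<Rightarrow> nat list set" where
  "words n = {w. set w \<subseteq> {..<n}}"

definition act :: "(nat \<Rightarrow> 'a \<Rightarrow> 'a) \<Rightarrow> nat list \<Rightarrow> 'a \<Rightarrow> 'a" where
  "act adj w x = foldr (\<lambda>i z. adj i z) w x"

text \<open>Equality in the universal Coxeter group C^n, as an equivalence on words.\<close>
inductive cox_eq :: "nat \<Rightarrow> nat list \<Rightarrow> nat list \<Rightarrow> bool" for n where
  cox_refl: "cox_eq n w w"
| cox_sym: "cox_eq n u w \<Longrightarrow> cox_eq n w u"
| cox_trans: "cox_eq n u v \<Longrightarrow> cox_eq n v w \<Longrightarrow> cox_eq n u w"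
| cox_sq: "i < n \<Longrightarrow> cox_eq n (u @ [i, i] @ v) (u @ v)"
| cox_comm: "i < n \<Longrightarrow> j < n \<Longrightarrow> (i + 2 \<le> j \<or> j + 2 \<le> i) \<Longrightarrow>
      cox_eq n (u @ [i, j] @ v) (u @ [j, i] @ v)"

definition premaniplex :: "nat \<Rightarrow> 'a set \<Rightarrow> (nat \<Rightarrow> 'a \<Rightarrow> 'a) \<Rightarrow> bool" where
  "premaniplex n F adj \<longleftrightarrow>
     (\<forall>i<n. \<forall>x\<in>F. adj i x \<in> F \<and> adj i (adj i x) = x) \<and>
     (\<forall>i<n. \<forall>j<n. (i + 2 \<le> j \<or> j + 2 \<le> i) \<longrightarrow>
        (\<forall>x\<in>F. adj i (adj j (adj i (adj j x))) = x))"

definition is_iso :: "nat \<Rightarrow> 'a set \<Rightarrow> (nat \<Rightarrow> 'a \<Rightarrow> 'a) \<Rightarrow> 'b set \<Rightarrow> (nat \<Rightarrow> 'b \<Rightarrow> 'b)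
    \<Rightarrow> ('a \<Rightarrow> 'b) \<Rightarrow> bool" where
  "is_iso n F1 adj1 F2 adj2 \<phi> \<longleftrightarrow>
     bij_betw \<phi> F1 F2 \<and> (\<forall>i<n. \<forall>x\<in>F1. \<phi> (adj1 i x) = adj2 i (\<phi> x))"

definition is_aut :: "nat \<Rightarrow> 'a set \<Rightarrow> (nat \<Rightarrow> 'a \<Rightarrow> 'a) \<Rightarrow> ('a \<Rightarrow> 'a) \<Rightarrow> bool" where
  "is_aut n F adj \<tau> \<longleftrightarrow> is_iso n F adj F adj \<tau>"

definition mon_group :: "nat \<Rightarrow> 'a set \<Rightarrow> (nat \<Rightarrow> 'a \<Rightarrow> 'a) \<Rightarrow> ('a \<Rightarrow> 'a) monoid" where
  "mon_group n F adj =
     \<lparr>carrier = {restrict (act adj w) F | w. w \<in> words n},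
      mult = (\<lambda>g h. restrict (g \<circ> h) F),
      one = restrict id F\<rparr>"

definition mon_bar :: "'a set \<Rightarrow> (nat \<Rightarrow> 'a \<Rightarrow> 'a) \<Rightarrow> nat list \<Rightarrow> ('a \<Rightarrow> 'a)" where
  "mon_bar F adj w = restrict (act adj w) F"

text \<open>Since Y is a premaniplex, the homotopy class W_omega(y)
  is determined by y and omega in C^m; eta y w is a word representing
  eta(W_[w](y)) in C^n. Composition: W_[w](y) W_[v]([w]y) = W_[v@w](y).\<close>
definition voltage_operator :: "nat \<Rightarrow> nat \<Rightarrow> 'b set \<Rightarrow> (nat \<Rightarrow> 'b \<Rightarrow> 'b)
    \<Rightarrow> ('b \<Rightarrow> nat list \<Rightarrow> nat list) \<Rightarrow> bool" where
  "voltage_operator n m G adjY eta \<longleftrightarrow>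
     premaniplex m G adjY \<and>
     (\<forall>y\<in>G. \<forall>w\<in>words m. eta y w \<in> words n) \<and>
     (\<forall>y\<in>G. \<forall>w\<in>words m. \<forall>w'\<in>words m. cox_eq m w w' \<longrightarrow> cox_eq n (eta y w) (eta y w')) \<and>
     (\<forall>y\<in>G. \<forall>w\<in>words m. \<forall>v\<in>words m.
        cox_eq n (eta y (v @ w)) (eta (act adjY w y) v @ eta y w))"

definition sdp_adj :: "(nat \<Rightarrow> 'a \<Rightarrow> 'a) \<Rightarrow> (nat \<Rightarrow> 'b \<Rightarrow> 'b) \<Rightarrow> ('b \<Rightarrow> nat list \<Rightarrow> nat list)
    \<Rightarrow> nat \<Rightarrow> 'a \<times> 'b \<Rightarrow> 'a \<times> 'b" where
  "sdp_adj adjX adjY eta i p = (act adjX (eta (snd p) [i]) (fst p), adjY i (snd p))"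

definition lifts :: "nat \<Rightarrow> 'a set \<Rightarrow> (nat \<Rightarrow> 'a \<Rightarrow> 'a) \<Rightarrow> 'b set \<Rightarrow> (nat \<Rightarrow> 'b \<Rightarrow> 'b)
    \<Rightarrow> ('b \<Rightarrow> nat list \<Rightarrow> nat list) \<Rightarrow> ('b \<Rightarrow> 'b) \<Rightarrow> bool" where
  "lifts m F adjX G adjY eta \<tau> \<longleftrightarrow>
     (\<exists>\<sigma>. is_aut m (F \<times> G) (sdp_adj adjX adjY eta) \<sigma> \<and>
          (\<forall>x\<in>F. \<forall>y\<in>G. snd (\<sigma> (x, y)) = \<tau> y))"

end

theory Submission
  imports Defs
begin

lemma act_Nil[simp]: "act adj [] = id"
  by (rule ext) (simp add: act_def)

lemma act_closed:
  assumes "premaniplex n F adj" "w \<in> words n" "x \<in> F"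
  shows "act adj w x \<in> F"
  using assms(2)
proof (induction w)
  case Nil then show ?case using assms by (simp add: act_def)
next
  case (Cons i w)
  then have "i < n" "w \<in> words n" by (auto simp: words_def)
  with Cons assms(1) show ?case by (auto simp: act_def premaniplex_def)
qed

lemma key:
  assumes X: "premaniplex n F adjX"
    and hom: "\<tau>s \<in> hom (mon_group n F adjX) (mon_group n F adjX)"
    and phi: "\<forall>i<n. \<forall>x\<in>F. \<phi> (adjX i x) = \<tau>s (mon_bar F adjX [i]) (\<phi> x)"
    and phiF: "\<forall>x\<in>F. \<phi> x \<in> F"
  shows "w \<in> words n \<Longrightarrow> x \<in> F \<Longrightarrow> \<phi> (act adjX w x) = \<tau>s (mon_bar F adjX w) (\<phi> x)"
proof (induction w arbitrary: x)
  case Nil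
  show ?case
  proof (cases "n = 0")
    case True
    have c: "carrier (mon_group n F adjX) = {restrict id F}"
      using True by (auto simp: mon_group_def words_def act_def)
    have "mon_bar F adjX [] \<in> carrier (mon_group n F adjX)"
      by (simp add: c mon_bar_def act_def restrict_def id_def)
    then have "\<tau>s (mon_bar F adjX []) \<in> carrier (mon_group n F adjX)"
      using hom by (simp add: hom_def Pi_iff)
    then show ?thesis using c Nil phiF by (simp add: act_def)
  next
    case False
    then have n0: "0 < n" by simp
    have b0: "mon_bar F adjX [0] \<in> carrier (mon_group n F adjX)"
      using n0 by (auto simp: mon_group_def mon_bar_def words_def)
    have eq: "mon_bar F adjX [] = mon_bar F adjX [0] \<otimes>\<^bsub>mon_group n F adjX\<^esub> mon_bar F adjX [0]"
      using X n0 by (auto simp: mon_group_def mon_bar_def act_def premaniplex_def restrict_def)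
    have "\<tau>s (mon_bar F adjX []) = \<tau>s (mon_bar F adjX [0]) \<otimes>\<^bsub>mon_group n F adjX\<^esub> \<tau>s (mon_bar F adjX [0])"
      using eq hom b0 by (simp add: hom_mult)
    then have "\<tau>s (mon_bar F adjX []) (\<phi> x) = \<tau>s (mon_bar F adjX [0]) (\<tau>s (mon_bar F adjX [0]) (\<phi> x))"
      using Nil phiF by (simp add: mon_group_def)
    also have "\<dots> = \<tau>s (mon_bar F adjX [0]) (\<phi> (adjX 0 x))" using phi n0 Nil by simp
    also have "\<dots> = \<phi> (adjX 0 (adjX 0 x))"
    proof -
      have "adjX 0 x \<in> F" using X n0 Nil by (simp add: premaniplex_def)
      then show ?thesis using phi n0 by simp
    qed
    also have "\<dots> = \<phi> x" using X n0 Nil by (simp add: premaniplex_def)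
    finally show ?thesis by (simp add: act_def)
  qed
next
  case (Cons i w)
  then have i: "i < n" and w: "w \<in> words n" by (auto simp: words_def)
  have ac: "act adjX w x \<in> F" using act_closed[OF X w Cons.prems(2)] .
  have bi: "mon_bar F adjX [i] \<in> carrier (mon_group n F adjX)"
    using i by (auto simp: mon_group_def mon_bar_def words_def)
  have bw: "mon_bar F adjX w \<in> carrier (mon_group n F adjX)"
    using w by (auto simp: mon_group_def mon_bar_def)
  have eq: "mon_bar F adjX (i # w) = mon_bar F adjX [i] \<otimes>\<^bsub>mon_group n F adjX\<^esub> mon_bar F adjX w"
    using act_closed[OF X w] by (auto simp: mon_group_def mon_bar_def act_def restrict_def)
  have "\<tau>s (mon_bar F adjX (i # w)) = \<tau>s (mon_bar F adjX [i]) \<otimes>\<^bsub>mon_group n F adjX\<^esub> \<tau>s (mon_bar F adjX w)"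
    using eq hom bi bw by (simp add: hom_mult)
  then have "\<tau>s (mon_bar F adjX (i # w)) (\<phi> x) = \<tau>s (mon_bar F adjX [i]) (\<tau>s (mon_bar F adjX w) (\<phi> x))"
    using Cons.prems phiF by (simp add: mon_group_def)
  also have "\<dots> = \<tau>s (mon_bar F adjX [i]) (\<phi> (act adjX w x))" using Cons.IH w Cons.prems by simp
  also have "\<dots> = \<phi> (adjX i (act adjX w x))" using phi i ac by simp
  finally show ?case by (simp add: act_def)
qed

theorem theorem6p5:
  fixes n m :: nat
    and F :: "'a set" and adjX :: "nat \<Rightarrow> 'a \<Rightarrow> 'a"
    and G :: "'b set" and adjY :: "nat \<Rightarrow> 'b \<Rightarrow> 'b"
    and eta :: "'b \<Rightarrow> nat list \<Rightarrow> nat list"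
    and \<tau> :: "'b \<Rightarrow> 'b"
    and \<tau>s :: "('a \<Rightarrow> 'a) \<Rightarrow> ('a \<Rightarrow> 'a)"
  assumes X: "premaniplex n F adjX"
    and Y: "voltage_operator n m G adjY eta"
    and aut: "is_aut m G adjY \<tau>"
    and hom: "\<tau>s \<in> hom (mon_group n F adjX) (mon_group n F adjX)"
    and compat: "\<forall>y\<in>G. \<forall>w\<in>words m.
                   \<tau>s (mon_bar F adjX (eta y w)) = mon_bar F adjX (eta (\<tau> y) w)"
    and iso: "\<exists>\<phi>. is_iso n F adjX F (\<lambda>i x. \<tau>s (mon_bar F adjX [i]) x) \<phi>"
  shows "lifts m F adjX G adjY eta \<tau>"
proof -
  obtain \<phi> where p: "is_iso n F adjX F (\<lambda>i x. \<tau>s (mon_bar F adjX [i]) x) \<phi>" using iso by blast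
  have bp: "bij_betw \<phi> F F" and phi: "\<forall>i<n. \<forall>x\<in>F. \<phi> (adjX i x) = \<tau>s (mon_bar F adjX [i]) (\<phi> x)"
    using p by (auto simp: is_iso_def)
  have phiF: "\<forall>x\<in>F. \<phi> x \<in> F" using bp by (auto simp: bij_betw_def)
  have bt: "bij_betw \<tau> G G" and tau: "\<forall>i<m. \<forall>y\<in>G. \<tau> (adjY i y) = adjY i (\<tau> y)"
    using aut by (auto simp: is_aut_def is_iso_def)
  have tG: "\<forall>y\<in>G. \<tau> y \<in> G" using bt by (auto simp: bij_betw_def)
  have etaw: "\<forall>y\<in>G. \<forall>w\<in>words m. eta y w \<in> words n" using Y by (simp add: voltage_operator_def)
  have "is_aut m (F \<times> G) (sdp_adj adjX adjY eta) (map_prod \<phi> \<tau>)"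
    unfolding is_aut_def is_iso_def
  proof (intro conjI allI impI ballI)
    show "bij_betw (map_prod \<phi> \<tau>) (F \<times> G) (F \<times> G)" using bij_betw_map_prod[OF bp bt] .
  next
    fix i p assume i: "i < m" and pF: "p \<in> F \<times> G"
    obtain x y where xy: "p = (x, y)" "x \<in> F" "y \<in> G" using pF by auto
    have wi: "[i] \<in> words m" using i by (simp add: words_def)
    have e: "eta y [i] \<in> words n" using etaw xy wi by blast
    have "\<phi> (act adjX (eta y [i]) x) = \<tau>s (mon_bar F adjX (eta y [i])) (\<phi> x)"
      using key[OF X hom phi phiF e xy(2)] .
    also have "\<dots> = mon_bar F adjX (eta (\<tau> y) [i]) (\<phi> x)" using compat xy wi by simp
    also have "\<dots> = act adjX (eta (\<tau> y) [i]) (\<phi> x)" using phiF xy by (simp add: mon_bar_def)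
    finally show "map_prod \<phi> \<tau> (sdp_adj adjX adjY eta i p) = sdp_adj adjX adjY eta i (map_prod \<phi> \<tau> p)"
      using xy tau i by (simp add: sdp_adj_def)
  qed
  then show ?thesis unfolding lifts_def by (intro exI[of _ "map_prod \<phi> \<tau>"]) auto
qed

end
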